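(* Let $G$ be a locally Hausdorff, locally compact groupoid and let $K\subset G^{(0)}$ be compact. Then there is a neighborhood $W$ of $G^{(0)}$ in $G$ such that $W\cap r^{-1}(K)$ is Hausdorff.
   Context: A locally Hausdorff, locally compact groupoid: groupoid operations continuous, $G^{(0)}$ Hausdorff, each point has a compact Hausdorff neighborhood, range map $r$ open. *)

theory Defs
  imports "HOL-Analysis.Analysis"
begin

text \<open>The arrows form the
  carrier of the abstract topology T; G0 is the unit space; r, s are the range and
  source maps; m is the (partial) multiplication, defined on composable pairs
  (g,h) with s g = r h; i is the inverse.\<close>

definition composable_pairs ::
  "'a topology \<Rightarrow> ('a \<Rightarrow> 'a) \<Rightarrow> ('a \<Rightarrow> 'a) \<Rightarrow> ('a \<times> 'a) set" where
  "composable_pairs T r s = {(g, h). g \<in> topspace T \<and> h \<in> topspace T \<and> s g = r h}"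

definition groupoid ::
  "'a topology \<Rightarrow> 'a set \<Rightarrow> ('a \<Rightarrow> 'a) \<Rightarrow> ('a \<Rightarrow> 'a) \<Rightarrow> ('a \<Rightarrow> 'a \<Rightarrow> 'a) \<Rightarrow> ('a \<Rightarrow> 'a) \<Rightarrow> bool"
  where
  "groupoid T G0 r s m i \<longleftrightarrow>
     G0 \<subseteq> topspace T \<and>
     (\<forall>g\<in>topspace T. r g \<in> G0 \<and> s g \<in> G0) \<and>
     (\<forall>u\<in>G0. r u = u \<and> s u = u) \<and>
     (\<forall>g\<in>topspace T. \<forall>h\<in>topspace T. s g = r h \<longrightarrow>
        m g h \<in> topspace T \<and> r (m g h) = r g \<and> s (m g h) = s h) \<and>
     (\<forall>g\<in>topspace T. \<forall>h\<in>topspace T. \<forall>k\<in>topspace T. s g = r h \<longrightarrow> s h = r k \<longrightarrow>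
        m (m g h) k = m g (m h k)) \<and>
     (\<forall>g\<in>topspace T. m (r g) g = g \<and> m g (s g) = g) \<and>
     (\<forall>g\<in>topspace T. i g \<in> topspace T \<and> r (i g) = s g \<and> s (i g) = r g \<and>
        m g (i g) = r g \<and> m (i g) g = s g)"

definition topological_groupoid ::
  "'a topology \<Rightarrow> 'a set \<Rightarrow> ('a \<Rightarrow> 'a) \<Rightarrow> ('a \<Rightarrow> 'a) \<Rightarrow> ('a \<Rightarrow> 'a \<Rightarrow> 'a) \<Rightarrow> ('a \<Rightarrow> 'a) \<Rightarrow> bool"
  where
  "topological_groupoid T G0 r s m i \<longleftrightarrow>
     groupoid T G0 r s m i \<and>
     continuous_map T (subtopology T G0) r \<and>
     continuous_map T (subtopology T G0) s \<and>
     continuous_map T T i \<and>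
     continuous_map (subtopology (prod_topology T T) (composable_pairs T r s)) T
        (\<lambda>(g, h). m g h)"

definition locally_Hausdorff_space :: "'a topology \<Rightarrow> bool" where
  "locally_Hausdorff_space T \<longleftrightarrow>
     (\<forall>x\<in>topspace T. \<exists>U. openin T U \<and> x \<in> U \<and> Hausdorff_space (subtopology T U))"

definition has_compact_Hausdorff_nbhds :: "'a topology \<Rightarrow> bool" where
  "has_compact_Hausdorff_nbhds T \<longleftrightarrow>
     (\<forall>x\<in>topspace T. \<exists>U C. openin T U \<and> x \<in> U \<and> U \<subseteq> C \<and>
        compactin T C \<and> Hausdorff_space (subtopology T C))"

definition lh_lc_groupoid ::
  "'a topology \<Rightarrow> 'a set \<Rightarrow> ('a \<Rightarrow> 'a) \<Rightarrow> ('a \<Rightarrow> 'a) \<Rightarrow> ('a \<Rightarrow> 'a \<Rightarrow> 'a) \<Rightarrow> ('a \<Rightarrow> 'a) \<Rightarrow> bool"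
  where
  "lh_lc_groupoid T G0 r s m i \<longleftrightarrow>
     topological_groupoid T G0 r s m i \<and>
     locally_Hausdorff_space T \<and>
     Hausdorff_space (subtopology T G0) \<and>
     has_compact_Hausdorff_nbhds T \<and>
     open_map T (subtopology T G0) r"

end

theory Submission
  imports Defs
begin

theorem mainTheorem5:
  fixes T :: "'a topology" and G0 :: "'a set" and r s i :: "'a \<Rightarrow> 'a"
    and m :: "'a \<Rightarrow> 'a \<Rightarrow> 'a" and K :: "'a set"
  assumes "lh_lc_groupoid T G0 r s m i"
    and "K \<subseteq> G0" and "compactin T K"
  shows "\<exists>W. W \<subseteq> topspace T \<and> (\<exists>V. openin T V \<and> G0 \<subseteq> V \<and> V \<subseteq> W) \<and>
           Hausdorff_space (subtopology T (W \<inter> {g \<in> topspace T. r g \<in> K}))"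
proof -
  have grp: "groupoid T G0 r s m i" and rc: "continuous_map T (subtopology T G0) r"
    and lh: "locally_Hausdorff_space T" and hG0: "Hausdorff_space (subtopology T G0)"
    using assms(1) unfolding lh_lc_groupoid_def topological_groupoid_def by auto
  have G0T: "G0 \<subseteq> topspace T" and runit: "\<And>u. u \<in> G0 \<Longrightarrow> r u = u"
    and rG0: "\<And>g. g \<in> topspace T \<Longrightarrow> r g \<in> G0"
    using grp unfolding groupoid_def by auto
  define X where "X = subtopology T K"
  have KT: "K \<subseteq> topspace T" using assms(2) G0T by auto
  have tX: "topspace X = K" using KT by (auto simp: X_def)
  have cX: "compact_space X" using assms(3) by (simp add: X_def compact_space_subtopology)
  have hX: "Hausdorff_space X"
    using Hausdorff_space_subtopology[OF hG0, of K] assms(2)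
    by (simp add: X_def subtopology_subtopology Int_absorb1 inf.absorb2)
  have regX: "regular_space X" using cX hX compact_Hausdorff_imp_regular_space by blast
  have nb: "neighbourhood_base_of (closedin X) X"
    using regX neighbourhood_base_of_closedin by blast
  have KclG0: "closedin (subtopology T G0) K"
    using compactin_imp_closedin[OF hG0] assms(2,3) by (simp add: compactin_subtopology)
  have "\<forall>u\<in>K. \<exists>U V C. openin T U \<and> u \<in> U \<and> Hausdorff_space (subtopology T U)
           \<and> openin X V \<and> closedin X C \<and> u \<in> V \<and> V \<subseteq> C \<and> C \<subseteq> U"
  proof
    fix u assume u: "u \<in> K"
    then obtain U where U: "openin T U" "u \<in> U" "Hausdorff_space (subtopology T U)"
      using lh KT unfolding locally_Hausdorff_space_def by blast
    have oUK: "openin X (U \<inter> K)" using U(1) by (auto simp: X_def openin_subtopology)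
    have uUK: "u \<in> U \<inter> K" using u U(2) by blast
    obtain V C where "openin X V" "closedin X C" "u \<in> V" "V \<subseteq> C" "C \<subseteq> U \<inter> K"
      using nb[unfolded neighbourhood_base_of, rule_format, OF conjI[OF oUK uUK]] by blast
    then show "\<exists>U V C. openin T U \<and> u \<in> U \<and> Hausdorff_space (subtopology T U)
           \<and> openin X V \<and> closedin X C \<and> u \<in> V \<and> V \<subseteq> C \<and> C \<subseteq> U"
      using U by (intro exI[of _ U] exI[of _ V] exI[of _ C]) auto
  qed
  then have "\<forall>u\<in>K. \<exists>t. openin T (fst t) \<and> u \<in> fst t \<and> Hausdorff_space (subtopology T (fst t))
           \<and> openin X (fst (snd t)) \<and> closedin X (snd (snd t)) \<and> u \<in> fst (snd t)
           \<and> fst (snd t) \<subseteq> snd (snd t) \<and> snd (snd t) \<subseteq> fst t"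
    by (metis fst_conv snd_conv)
  then obtain f where f: "\<forall>u\<in>K. openin T (fst (f u)) \<and> u \<in> fst (f u) \<and> Hausdorff_space (subtopology T (fst (f u)))
           \<and> openin X (fst (snd (f u))) \<and> closedin X (snd (snd (f u))) \<and> u \<in> fst (snd (f u))
           \<and> fst (snd (f u)) \<subseteq> snd (snd (f u)) \<and> snd (snd (f u)) \<subseteq> fst (f u)"
    by (erule bchoice[THEN exE])
  define HU where "HU u = fst (f u)" for u
  define HV where "HV u = fst (snd (f u))" for u
  define HC where "HC u = snd (snd (f u))" for u
  have H: "\<And>u. u \<in> K \<Longrightarrow> openin T (HU u) \<and> u \<in> HU u
        \<and> Hausdorff_space (subtopology T (HU u))
        \<and> openin X (HV u) \<and> closedin X (HC u) \<and> u \<in> HV u \<and> HV u \<subseteq> HC u \<and> HC u \<subseteq> HU u"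
    using f unfolding HU_def HV_def HC_def by blast
  have "compactin X K" using cX tX by (metis compact_space_def)
  moreover have "\<forall>B\<in>HV ` K. openin X B" using H by blast
  moreover have "K \<subseteq> \<Union>(HV ` K)" using H by blast
  ultimately obtain F where F: "finite F" "F \<subseteq> HV ` K" "K \<subseteq> \<Union>F"
    unfolding compactin_def by blast
  then obtain F' where F': "finite F'" "F' \<subseteq> K" "K \<subseteq> \<Union>(HV ` F')"
    by (metis finite_subset_image)
  have HCcl: "closedin T' {g \<in> topspace T'. r g \<in> HC u}"
    if "u \<in> K" "continuous_map T' (subtopology T G0) r" for u and T' :: "'a topology"
  proof -
    have "closedin (subtopology T G0) (HC u)"
    proof (rule closedin_trans_full[OF _ KclG0])
      show "closedin (subtopology (subtopology T G0) K) (HC u)"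
        using H[OF that(1)] assms(2) by (simp add: X_def subtopology_subtopology inf.absorb2)
    qed
    then show ?thesis using closedin_continuous_map_preimage that(2) by blast
  qed
  define W where "W = {g \<in> topspace T. \<forall>u\<in>F'. g \<in> HU u \<or> r g \<notin> HC u}"
  have Wo: "openin T W"
  proof (cases "F' = {}")
    case True then show ?thesis by (simp add: W_def)
  next
    case False
    have HUT: "\<And>u. u \<in> F' \<Longrightarrow> HU u \<subseteq> topspace T"
      using H F'(2) openin_subset by blast
    have "W = (\<Inter>u\<in>F'. HU u \<union> (topspace T - {g \<in> topspace T. r g \<in> HC u}))"
      using False HUT unfolding W_def by auto
    moreover have "openin T (\<Inter>u\<in>F'. HU u \<union> (topspace T - {g \<in> topspace T. r g \<in> HC u}))"
    proof (rule openin_INT2[OF F'(1) False])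
      fix u assume u: "u \<in> F'"
      then have uK: "u \<in> K" using F'(2) by auto
      show "openin T (HU u \<union> (topspace T - {g \<in> topspace T. r g \<in> HC u}))"
        using H[OF uK] HCcl[OF uK rc] by (simp add: openin_Un openin_diff)
    qed
    ultimately show ?thesis by simp
  qed
  have G0W: "G0 \<subseteq> W"
  proof
    fix u assume u: "u \<in> G0"
    have "u \<in> HU v \<or> r u \<notin> HC v" if "v \<in> F'" for v
      using H[of v] that F'(2) runit[OF u] by auto
    then show "u \<in> W" using u G0T by (auto simp: W_def)
  qed
  define S where "S = W \<inter> {g \<in> topspace T. r g \<in> K}"
  have sep: "\<exists>A B. openin T A \<and> openin T B \<and> x \<in> A \<and> y \<in> B \<and> disjnt A B"
    if x: "x \<in> S" and y: "y \<in> S" and xy: "x \<noteq> y" for x y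
  proof (cases "r x = r y")
    case False
    have "r x \<in> topspace (subtopology T G0)" "r y \<in> topspace (subtopology T G0)"
      using x y rG0 G0T by (auto simp: S_def W_def)
    then obtain A B where AB: "openin (subtopology T G0) A" "openin (subtopology T G0) B"
      "r x \<in> A" "r y \<in> B" "disjnt A B"
      using hG0 False unfolding Hausdorff_space_def by blast
    show ?thesis
      apply (rule exI[of _ "{g \<in> topspace T. r g \<in> A}"], rule exI[of _ "{g \<in> topspace T. r g \<in> B}"])
      using AB openin_continuous_map_preimage[OF rc] x y
      by (auto simp: S_def W_def disjnt_def)
  next
    case True
    have "r x \<in> K" using x by (simp add: S_def)
    then obtain u where u: "u \<in> F'" "r x \<in> HV u" using F'(3) by blast
    have uK: "u \<in> K" using u F'(2) by auto
    have "r x \<in> HC u" using H[OF uK] u by auto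
    then have xu: "x \<in> HU u" and yu: "y \<in> HU u" using x y True u(1) by (auto simp: S_def W_def)
    have "x \<in> topspace (subtopology T (HU u))" "y \<in> topspace (subtopology T (HU u))"
      using xu yu x y by (auto simp: S_def W_def)
    then obtain A B where AB: "openin (subtopology T (HU u)) A" "openin (subtopology T (HU u)) B"
      "x \<in> A" "y \<in> B" "disjnt A B"
      using H[OF uK] xy unfolding Hausdorff_space_def by blast
    then show ?thesis using openin_open_subtopology H[OF uK] by blast
  qed
  have "Hausdorff_space (subtopology T S)"
    unfolding Hausdorff_space_def
  proof (intro allI impI)
    fix x y assume "x \<in> topspace (subtopology T S) \<and> y \<in> topspace (subtopology T S) \<and> x \<noteq> y"
    then have "x \<in> S" "y \<in> S" "x \<noteq> y" by auto
    then obtain A B where AB: "openin T A" "openin T B" "x \<in> A" "y \<in> B" "disjnt A B"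
      using sep by blast
    show "\<exists>U V. openin (subtopology T S) U \<and> openin (subtopology T S) V \<and> x \<in> U \<and> y \<in> V \<and> disjnt U V"
      apply (rule exI[of _ "S \<inter> A"], rule exI[of _ "S \<inter> B"])
      using AB \<open>x \<in> S\<close> \<open>y \<in> S\<close>
      by (auto simp: openin_subtopology_Int2 disjnt_def)
  qed
  moreover have "W \<subseteq> topspace T" by (auto simp: W_def)
  ultimately show ?thesis using Wo G0W unfolding S_def by blast
qed

end
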